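(* Under the positivity assumption, if $\boldsymbol{S}_1$ and $\boldsymbol{S}_2$ are stable variable sets of $Y$ under $P^{\text{tr}}$, then $\boldsymbol{S}_1\cap\boldsymbol{S}_2$ is also a stable variable set of $Y$ under $P^{\text{tr}}$.
   Context: $\boldsymbol{X}=(X_1,\dots,X_d)^T\in\mathbb{R}^d$ features and $Y\in\mathbb{R}$ outcome with joint training distribution $P^{\text{tr}}(\boldsymbol{X},Y)$ (given by a density), $\mathcal{X}_j$ the support of $X_j$. Positivity assumption: for all $x_j\in\mathcal{X}_j$, $P^{\text{tr}}(X_1=x_1,\dots,X_d=x_d)>0$. A subset $\boldsymbol{S}\subseteq\boldsymbol{X}$ is a stable variable set of $Y$ under $P^{\text{tr}}$ if $\mathbb{E}_{P^{\text{tr}}}[Y\mid\boldsymbol{S}]=\mathbb{E}_{P^{\text{tr}}}[Y\mid\boldsymbol{X}]$ (the empty set is allowed, with $\mathbb{E}[Y\mid\emptyset]=\mathbb{E}[Y]$). *)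

theory Defs
  imports "HOL-Probability.Probability"
begin

definition feature_vec :: "(nat \<Rightarrow> 'a \<Rightarrow> real) \<Rightarrow> nat set \<Rightarrow> 'a \<Rightarrow> (nat \<Rightarrow> real)" where
  "feature_vec X S = (\<lambda>\<omega>. restrict (\<lambda>j. X j \<omega>) S)"

text \<open>sigma-algebra on the sample space generated by the features indexed by S
  (trivial algebra for S empty).\<close>
definition feat_alg :: "'a measure \<Rightarrow> (nat \<Rightarrow> 'a \<Rightarrow> real) \<Rightarrow> nat set \<Rightarrow> 'a measure" where
  "feat_alg M X S = vimage_algebra (space M) (feature_vec X S) (PiM S (\<lambda>_. borel :: real measure))"

definition stable_set :: "'a measure \<Rightarrow> (nat \<Rightarrow> 'a \<Rightarrow> real) \<Rightarrow> nat \<Rightarrow> ('a \<Rightarrow> real) \<Rightarrow> nat set \<Rightarrow> bool" where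
  "stable_set M X d Y S \<longleftrightarrow> S \<subseteq> {..<d} \<and>
     (AE \<omega> in M. real_cond_exp M (feat_alg M X S) Y \<omega> = real_cond_exp M (feat_alg M X {..<d}) Y \<omega>)"

definition rv_support :: "'a measure \<Rightarrow> ('a \<Rightarrow> real) \<Rightarrow> real set" where
  "rv_support M Z = {x. \<forall>e>0. measure (distr M borel Z) (ball x e) > 0}"

end

theory Submission
  imports Defs
begin

lemma ennreal_prod_nz: "finite I \<Longrightarrow> (\<forall>i\<in>I. (f i::ennreal) \<noteq> 0) \<Longrightarrow> (\<Prod>i\<in>I. f i) \<noteq> 0"
  by (induct I rule: finite_induct) auto

interpretation Pl: product_sigma_finite "\<lambda>_::nat. lborel::real measure"
  by (simp add: product_sigma_finite_def lborel.sigma_finite_measure_axioms)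

lemma PL:
  fixes n S1 S2 :: "nat set" and Kj :: "nat \<Rightarrow> real set"
  assumes fin: "finite n" and S1n: "S1 \<subseteq> n" and S2n: "S2 \<subseteq> n"
    and Kj: "\<And>j. j \<in> n \<Longrightarrow> Kj j \<in> sets borel" and Kpos: "\<And>j. j \<in> n \<Longrightarrow> emeasure lborel (Kj j) \<noteq> 0"
    and A'[measurable]: "A' \<in> sets (PiM S1 (\<lambda>_. lborel))" and B'[measurable]: "B' \<in> sets (PiM S2 (\<lambda>_. lborel))"
    and ae: "AE x in PiM n (\<lambda>_. lborel). x \<in> PiE n Kj \<longrightarrow> (restrict x S1 \<in> A' \<longleftrightarrow> restrict x S2 \<in> B')"
  shows "\<exists>C'\<in>sets (PiM (S1\<inter>S2) (\<lambda>_. lborel)). AE x in PiM n (\<lambda>_. lborel).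
            x \<in> PiE n Kj \<longrightarrow> (restrict x S1 \<in> A' \<longleftrightarrow> restrict x (S1\<inter>S2) \<in> C')"
proof -
  define J where "J = S2 - S1"
  define I where "I = n - J"
  define C where "C = S1 \<inter> S2"
  let ?L = "\<lambda>S. PiM S (\<lambda>_::nat. lborel :: real measure)"
  have nJI: "n = J \<union> I" and JI: "J \<inter> I = {}" and finJ: "finite J" and finI: "finite I"
    using S2n fin by (auto simp: J_def I_def intro: finite_subset)
  have S1I: "S1 \<subseteq> I" and CI: "C \<subseteq> I" and S2JC: "S2 = J \<union> C"
    using S1n S2n by (auto simp: J_def I_def C_def)
  have K[measurable]: "PiE n Kj \<in> sets (?L n)"
    using Kj fin by (intro sets_PiM_I_finite) auto
  have KJ: "PiE J Kj \<in> sets (?L J)"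
    using Kj finJ nJI by (intro sets_PiM_I_finite) auto
  have [measurable]: "(\<lambda>x. restrict x S1) \<in> measurable (?L n) (?L S1)"
    using S1n by (rule measurable_restrict_subset)
  have [measurable]: "(\<lambda>x. restrict x S2) \<in> measurable (?L n) (?L S2)"
    using S2n by (rule measurable_restrict_subset)
  define N where "N = {x \<in> space (?L n). \<not> (x \<in> PiE n Kj \<longrightarrow> (restrict x S1 \<in> A' \<longleftrightarrow> restrict x S2 \<in> B'))}"
  have N[measurable]: "N \<in> sets (?L n)"
  proof -
    have a: "(\<lambda>x. restrict x S1) -` A' \<inter> space (?L n) \<in> sets (?L n)"
      by (rule measurable_sets[OF measurable_restrict_subset[OF S1n] A'])
    have b: "(\<lambda>x. restrict x S2) -` B' \<inter> space (?L n) \<in> sets (?L n)"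
      by (rule measurable_sets[OF measurable_restrict_subset[OF S2n] B'])
    have "N = PiE n Kj \<inter> ((((\<lambda>x. restrict x S1) -` A' \<inter> space (?L n)) - ((\<lambda>x. restrict x S2) -` B' \<inter> space (?L n)))
       \<union> (((\<lambda>x. restrict x S2) -` B' \<inter> space (?L n)) - ((\<lambda>x. restrict x S1) -` A' \<inter> space (?L n))))"
      unfolding N_def by blast
    then show ?thesis using a b K by auto
  qed
  have "emeasure (?L n) N = 0"
    by (rule AE_iff_measurable[OF N N_def[symmetric], THEN iffD1, OF ae])
  then have "(\<integral>\<^sup>+b. emeasure (?L I) ((\<lambda>y. merge J I (b, y)) -` N \<inter> space (?L I)) \<partial>?L J) = 0"
    using Pl.emeasure_fold_integral[OF JI finJ finI, of N] N nJI by simp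
  then have aeJ: "AE b in ?L J. emeasure (?L I) ((\<lambda>y. merge J I (b, y)) -` N \<inter> space (?L I)) = 0"
    using Pl.emeasure_fold_measurable[OF JI finJ finI, of N] N nJI
    by (simp add: nn_integral_0_iff_AE)
  have "\<exists>b0\<in>PiE J Kj. emeasure (?L I) ((\<lambda>y. merge J I (b0, y)) -` N \<inter> space (?L I)) = 0"
  proof (rule ccontr)
    assume "\<not> ?thesis"
    then have "AE b in ?L J. b \<notin> PiE J Kj" using aeJ by (auto elim!: AE_mp)
    then have "emeasure (?L J) (PiE J Kj) = 0"
    proof -
      have "{x \<in> space (?L J). \<not> x \<notin> PiE J Kj} = PiE J Kj"
        using sets.sets_into_space[OF KJ] by blast
      from AE_iff_measurable[OF KJ this] show ?thesis using \<open>AE b in ?L J. b \<notin> PiE J Kj\<close> by simp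
    qed
    moreover have "emeasure (?L J) (PiE J Kj) = (\<Prod>j\<in>J. emeasure lborel (Kj j))"
      using Kj finJ nJI by (intro Pl.emeasure_PiM) auto
    moreover have "(\<Prod>j\<in>J. emeasure lborel (Kj j)) \<noteq> 0"
      using Kpos finJ nJI by (intro ennreal_prod_nz) auto
    ultimately show False by simp
  qed
  then obtain b0 where b0: "b0 \<in> PiE J Kj"
    and b0N: "emeasure (?L I) ((\<lambda>y. merge J I (b0, y)) -` N \<inter> space (?L I)) = 0" by blast
  have b0sp: "b0 \<in> space (?L J)" using b0 by (auto simp: space_PiM)
  define C' where "C' = (\<lambda>c. merge J C (b0, c)) -` B' \<inter> space (?L C)"
  have mC: "(\<lambda>c. merge J C (b0, c)) \<in> measurable (?L C) (?L S2)"
  proof -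
    have "(\<lambda>c. merge J C (b0, c)) \<in> measurable (?L C) (?L (J \<union> C))"
      using b0sp by (intro measurable_compose[OF _ measurable_merge] measurable_Pair) auto
    then show ?thesis using S2JC by simp
  qed
  have C': "C' \<in> sets (?L C)"
    unfolding C'_def using mC B' by (rule measurable_sets)
  have [measurable]: "(\<lambda>x. restrict x C) \<in> measurable (?L n) (?L C)"
    using CI nJI by (intro measurable_restrict_subset) auto
  define N2 where "N2 = {x \<in> space (?L n). \<not> (x \<in> PiE n Kj \<longrightarrow> (restrict x S1 \<in> A' \<longleftrightarrow> restrict x C \<in> C'))}"
  have N2[measurable]: "N2 \<in> sets (?L n)"
  proof -
    have a: "(\<lambda>x. restrict x S1) -` A' \<inter> space (?L n) \<in> sets (?L n)"
      by (rule measurable_sets[OF measurable_restrict_subset[OF S1n] A'])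
    have b: "(\<lambda>x. restrict x C) -` C' \<inter> space (?L n) \<in> sets (?L n)"
      by (rule measurable_sets[OF measurable_restrict_subset C']) (use CI nJI in auto)
    have "N2 = PiE n Kj \<inter> ((((\<lambda>x. restrict x S1) -` A' \<inter> space (?L n)) - ((\<lambda>x. restrict x C) -` C' \<inter> space (?L n)))
       \<union> (((\<lambda>x. restrict x C) -` C' \<inter> space (?L n)) - ((\<lambda>x. restrict x S1) -` A' \<inter> space (?L n))))"
      unfolding N2_def by blast
    then show ?thesis using a b K by auto
  qed
  have slice: "(\<lambda>y. merge J I (b, y)) -` N2 \<inter> space (?L I) =
     (if b \<in> PiE J Kj then (\<lambda>y. merge J I (b0, y)) -` N \<inter> space (?L I) else {})"
    if b: "b \<in> space (?L J)" for b
  proof -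
    have e1: "merge J I (b', y) \<in> PiE n Kj \<longleftrightarrow> b' \<in> PiE J Kj \<and> y \<in> PiE I Kj"
      if "y \<in> space (?L I)" "b' \<in> space (?L J)" for b' y
      using that nJI JI by (auto simp: space_PiM PiE_iff merge_def extensional_def split: if_splits)
    have e2: "restrict (merge J I (b', y)) S1 = restrict y S1" for b' y
      using S1I JI by (auto simp: merge_def restrict_def fun_eq_iff)
    have e3: "restrict (merge J I (b', y)) C = restrict y C" for b' y
      using CI JI by (auto simp: merge_def restrict_def fun_eq_iff)
    have e4: "restrict (merge J I (b0, y)) S2 = merge J C (b0, restrict y C)" for y
      using CI JI S2JC by (auto simp: merge_def restrict_def fun_eq_iff)
    have e5: "merge J I (b', y) \<in> space (?L n)" if "y \<in> space (?L I)" for b' y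
      using that nJI by (auto simp: space_PiM PiE_iff merge_def extensional_def)
    have e6: "restrict y C \<in> space (?L C)" for y
      by (auto simp: space_PiM)
    have f1: "merge J I (b, y) \<in> N2 \<longleftrightarrow> b \<in> PiE J Kj \<and> \<not> (y \<in> PiE I Kj \<longrightarrow> (restrict y S1 \<in> A' \<longleftrightarrow> restrict y C \<in> C'))"
      if "y \<in> space (?L I)" for y
    proof -
      have "merge J I (b, y) \<in> N2 \<longleftrightarrow> \<not> (merge J I (b, y) \<in> PiE n Kj \<longrightarrow> (restrict (merge J I (b, y)) S1 \<in> A' \<longleftrightarrow> restrict (merge J I (b, y)) C \<in> C'))"
        unfolding N2_def using e5[OF that] by blast
      then show ?thesis unfolding e1[OF that b] e2 e3 by blast
    qed
    have f2: "merge J I (b0, y) \<in> N \<longleftrightarrow> \<not> (y \<in> PiE I Kj \<longrightarrow> (restrict y S1 \<in> A' \<longleftrightarrow> restrict y C \<in> C'))"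
      if "y \<in> space (?L I)" for y
    proof -
      have "merge J I (b0, y) \<in> N \<longleftrightarrow> \<not> (merge J I (b0, y) \<in> PiE n Kj \<longrightarrow> (restrict (merge J I (b0, y)) S1 \<in> A' \<longleftrightarrow> restrict (merge J I (b0, y)) S2 \<in> B'))"
        unfolding N_def using e5[OF that] by blast
      moreover have "restrict y C \<in> C' \<longleftrightarrow> merge J C (b0, restrict y C) \<in> B'"
        unfolding C'_def using e6 by blast
      ultimately show ?thesis unfolding e1[OF that b0sp] e2 e4 using b0 by blast
    qed
    show ?thesis
    proof (cases "b \<in> PiE J Kj")
      case True
      then show ?thesis using f1 f2 by auto
    next
      case False
      then show ?thesis using f1 by auto
    qed
  qed
  have "emeasure (?L n) N2 = (\<integral>\<^sup>+b. emeasure (?L I) ((\<lambda>y. merge J I (b, y)) -` N2 \<inter> space (?L I)) \<partial>?L J)"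
    using Pl.emeasure_fold_integral[OF JI finJ finI, of N2] N2 nJI by simp
  also have "\<dots> = (\<integral>\<^sup>+b. 0 \<partial>?L J)"
    by (intro nn_integral_cong) (simp add: slice b0N)
  finally have "emeasure (?L n) N2 = 0" by simp
  then have "AE x in ?L n. x \<in> PiE n Kj \<longrightarrow> (restrict x S1 \<in> A' \<longleftrightarrow> restrict x C \<in> C')"
    by (rule AE_iff_measurable[OF N2 N2_def[symmetric], THEN iffD2])
  then show ?thesis using C' unfolding C_def by blast
qed
lemma cond_le:
  assumes P: "prob_space M" and sub: "subalgebra M F" and W[measurable]: "integrable M W"
    and lev: "\<And>r::real. r \<in> \<rat> \<Longrightarrow> \<exists>C\<in>sets F. AE \<omega> in M. (r < W \<omega> \<longleftrightarrow> \<omega> \<in> C)"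
  shows "AE \<omega> in M. W \<omega> \<le> real_cond_exp M F W \<omega>"
proof -
  interpret prob_space M by fact
  interpret sigma_finite_subalgebra M F
    by (rule finite_measure_subalgebra_is_sigma_finite)
       (simp add: finite_measure_subalgebra_def finite_measure_subalgebra_axioms_def sub finite_measure_axioms)
  let ?W' = "real_cond_exp M F W"
  have spF: "space F = space M" and sF: "sets F \<subseteq> sets M" using sub by (auto simp: subalgebra_def)
  have iW': "integrable M ?W'" by (rule real_cond_exp_int(1)[OF W])
  have key: "AE \<omega> in M. r < W \<omega> \<longrightarrow> r < ?W' \<omega>" if r: "r \<in> \<rat>" for r
  proof -
    obtain C where C: "C \<in> sets F" and aeC: "AE \<omega> in M. (r < W \<omega> \<longleftrightarrow> \<omega> \<in> C)" using lev[OF r] by blast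
    define D where "D = C \<inter> {\<omega>\<in>space M. ?W' \<omega> \<le> r}"
    have "{\<omega>\<in>space F. ?W' \<omega> \<le> r} \<in> sets F" by measurable
    then have DF: "D \<in> sets F" unfolding D_def spF using C by auto
    then have DM[measurable]: "D \<in> sets M" using sF by auto
    have i1: "integrable M (\<lambda>\<omega>. indicator D \<omega> * W \<omega>)" using integrable_mult_indicator[OF DM W] by simp
    have i2: "integrable M (\<lambda>\<omega>. indicator D \<omega> * ?W' \<omega>)" using integrable_mult_indicator[OF DM iW'] by simp
    have i3: "integrable M (\<lambda>\<omega>. indicator D \<omega> * r)" using integrable_mult_indicator[OF DM integrable_const[of r]] by (simp add: mult.commute)
    have eq: "(\<integral>\<omega>. indicator D \<omega> * W \<omega> \<partial>M) = (\<integral>\<omega>. indicator D \<omega> * ?W' \<omega> \<partial>M)"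
      using real_cond_exp_intA[OF W DF] by (simp add: set_lebesgue_integral_def)
    have le: "(\<integral>\<omega>. indicator D \<omega> * ?W' \<omega> \<partial>M) \<le> (\<integral>\<omega>. indicator D \<omega> * r \<partial>M)"
      by (rule integral_mono[OF i2 i3]) (auto simp: D_def indicator_def)
    have "(\<integral>\<omega>. indicator D \<omega> * (W \<omega> - r) \<partial>M) = (\<integral>\<omega>. indicator D \<omega> * W \<omega> - indicator D \<omega> * r \<partial>M)"
      by (simp add: algebra_simps)
    also have "\<dots> = (\<integral>\<omega>. indicator D \<omega> * W \<omega> \<partial>M) - (\<integral>\<omega>. indicator D \<omega> * r \<partial>M)"
      by (rule Bochner_Integration.integral_diff[OF i1 i3])
    finally have int_le: "(\<integral>\<omega>. indicator D \<omega> * (W \<omega> - r) \<partial>M) \<le> 0" using eq le by linarith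
    have i4: "integrable M (\<lambda>\<omega>. indicator D \<omega> * (W \<omega> - r))"
      using Bochner_Integration.integrable_diff[OF i1 i3] by (simp add: algebra_simps)
    have nn: "AE \<omega> in M. 0 \<le> indicator D \<omega> * (W \<omega> - r)"
      using aeC by eventually_elim (auto simp: D_def indicator_def)
    have "(\<integral>\<omega>. indicator D \<omega> * (W \<omega> - r) \<partial>M) = 0"
      using int_le integral_nonneg_AE[OF nn] by linarith
    then have z: "AE \<omega> in M. indicator D \<omega> * (W \<omega> - r) = 0"
      using integral_nonneg_eq_0_iff_AE[OF i4 nn] by simp
    show ?thesis
      using z aeC AE_space by eventually_elim (auto simp: D_def indicator_def split: if_splits)
  qed
  have "AE \<omega> in M. \<forall>r\<in>\<rat>. r < W \<omega> \<longrightarrow> r < ?W' \<omega>"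
    using key by (subst AE_ball_countable) (auto simp: countable_rat)
  then show ?thesis
  proof eventually_elim
    case (elim \<omega>)
    show ?case
    proof (rule ccontr)
      assume "\<not> W \<omega> \<le> ?W' \<omega>"
      then obtain r where "r \<in> \<rat>" "?W' \<omega> < r" "r < W \<omega>" using Rats_dense_in_real[of "?W' \<omega>" "W \<omega>"] by auto
      then show False using elim by auto
    qed
  qed
qed


context
  fixes M :: "'a measure" and Z :: "'a \<Rightarrow> real"
  assumes P: "prob_space M" and Zm: "Z \<in> borel_measurable M"
begin

lemma supp_closed: "closed (rv_support M Z)"
proof -
  let ?mu = "distr M borel Z"
  interpret mu: prob_space ?mu using P Zm by (rule prob_space.prob_space_distr)
  have "open (- rv_support M Z)"
    unfolding open_contains_ball
  proof
    fix x :: real assume "x \<in> - rv_support M Z"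
    then obtain e where e: "e > 0" "\<not> measure ?mu (ball x e) > 0" by (auto simp: rv_support_def)
    then have m0: "measure ?mu (ball x e) = 0" using measure_nonneg[of ?mu "ball x e"] by linarith
    have "ball x e \<subseteq> - rv_support M Z"
    proof
      fix y :: real assume y: "y \<in> ball x e"
      define e' where "e' = e - dist x y"
      have e': "e' > 0" using y by (simp add: e'_def)
      have "ball y e' \<subseteq> ball x e"
      proof
        fix z assume "z \<in> ball y e'"
        then have "dist y z < e'" by simp
        moreover have "dist x z \<le> dist x y + dist y z" by (rule dist_triangle)
        ultimately show "z \<in> ball x e" by (simp add: e'_def)
      qed
      then have "measure ?mu (ball y e') \<le> measure ?mu (ball x e)"
        by (intro mu.finite_measure_mono) auto
      then have "\<not> measure ?mu (ball y e') > 0" using m0 by simp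
      then show "y \<in> - rv_support M Z" using e' by (auto simp: rv_support_def)
    qed
    then show "\<exists>e>0. ball x e \<subseteq> - rv_support M Z" using e by blast
  qed
  then show ?thesis by (simp add: closed_def)
qed

lemma supp_ae: "AE \<omega> in M. Z \<omega> \<in> rv_support M Z"
proof -
  let ?mu = "distr M borel Z"
  interpret mu: prob_space ?mu using P Zm by (rule prob_space.prob_space_distr)
  define F where "F = {ball x e | (x::real) e. e > 0 \<and> measure ?mu (ball x e) = 0}"
  have "\<And>S. S \<in> F \<Longrightarrow> openin (top_of_set UNIV) S" by (auto simp: F_def)
  then obtain F' where F': "F' \<subseteq> F" "countable F'" "\<Union>F' = \<Union>F" by (rule Lindelof_openin)
  have "(\<Union>B\<in>F'. B) \<in> null_sets ?mu"
  proof (rule null_sets_UN')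
    show "countable F'" by fact
    fix B assume "B \<in> F'"
    then obtain x e where B: "B = ball x e" "measure ?mu (ball x e) = 0" using F' by (auto simp: F_def)
    then show "B \<in> null_sets ?mu" by (auto simp: null_sets_def mu.emeasure_eq_measure)
  qed
  then have "AE x in ?mu. x \<notin> (\<Union>B\<in>F'. B)" by (rule AE_not_in)
  then have "AE x in ?mu. x \<in> rv_support M Z"
  proof eventually_elim
    case (elim x)
    show ?case
    proof (rule ccontr)
      assume "x \<notin> rv_support M Z"
      then obtain e where e: "e > 0" "\<not> measure ?mu (ball x e) > 0" by (auto simp: rv_support_def)
      then have m0: "measure ?mu (ball x e) = 0" using measure_nonneg[of ?mu "ball x e"] by linarith
      then have "ball x e \<in> F" using e by (auto simp: F_def)
      then have "x \<in> \<Union>F" using e centre_in_ball[of x e] by blast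
      then show False using elim F' by auto
    qed
  qed
  then show ?thesis
    using supp_closed by (subst (asm) AE_distr_iff) (auto simp: Zm)
qed

end


lemma pred_meas:
  assumes "S1 \<subseteq> n" "S2 \<subseteq> n" "K \<in> sets (PiM n (\<lambda>_. M))" "A' \<in> sets (PiM S1 (\<lambda>_. M))" "B' \<in> sets (PiM S2 (\<lambda>_. M))"
  shows "Measurable.pred (PiM n (\<lambda>_. M)) (\<lambda>x. x \<in> K \<longrightarrow> (restrict x S1 \<in> A' \<longleftrightarrow> restrict x S2 \<in> B'))"
proof -
  have a: "(\<lambda>x. restrict x S1) -` A' \<inter> space (PiM n (\<lambda>_. M)) \<in> sets (PiM n (\<lambda>_. M))"
    by (rule measurable_sets[OF measurable_restrict_subset[OF assms(1)] assms(4)])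
  have b: "(\<lambda>x. restrict x S2) -` B' \<inter> space (PiM n (\<lambda>_. M)) \<in> sets (PiM n (\<lambda>_. M))"
    by (rule measurable_sets[OF measurable_restrict_subset[OF assms(2)] assms(5)])
  have "{x \<in> space (PiM n (\<lambda>_. M)). x \<in> K \<longrightarrow> (restrict x S1 \<in> A' \<longleftrightarrow> restrict x S2 \<in> B')}
     = space (PiM n (\<lambda>_. M)) - (K \<inter> ((((\<lambda>x. restrict x S1) -` A' \<inter> space (PiM n (\<lambda>_. M))) - ((\<lambda>x. restrict x S2) -` B' \<inter> space (PiM n (\<lambda>_. M))))
       \<union> (((\<lambda>x. restrict x S2) -` B' \<inter> space (PiM n (\<lambda>_. M))) - ((\<lambda>x. restrict x S1) -` A' \<inter> space (PiM n (\<lambda>_. M))))))"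
    by blast
  moreover have "space (PiM n (\<lambda>_. M)) - (K \<inter> ((((\<lambda>x. restrict x S1) -` A' \<inter> space (PiM n (\<lambda>_. M))) - ((\<lambda>x. restrict x S2) -` B' \<inter> space (PiM n (\<lambda>_. M))))
       \<union> (((\<lambda>x. restrict x S2) -` B' \<inter> space (PiM n (\<lambda>_. M))) - ((\<lambda>x. restrict x S1) -` A' \<inter> space (PiM n (\<lambda>_. M)))))) \<in> sets (PiM n (\<lambda>_. M))"
    by (rule sets.Diff[OF sets.top sets.Int[OF assms(3) sets.Un[OF sets.Diff[OF a b] sets.Diff[OF b a]]]])
  ultimately have "{x \<in> space (PiM n (\<lambda>_. M)). x \<in> K \<longrightarrow> (restrict x S1 \<in> A' \<longleftrightarrow> restrict x S2 \<in> B')} \<in> sets (PiM n (\<lambda>_. M))"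
    by simp
  then show ?thesis by (rule pred_def[THEN iffD2])
qed

theorem lemma2:
  fixes M :: "'a measure" and X :: "nat \<Rightarrow> 'a \<Rightarrow> real" and Y :: "'a \<Rightarrow> real"
    and d :: nat and S1 S2 :: "nat set"
    and q :: "(nat \<Rightarrow> real) \<times> real \<Rightarrow> ennreal" and p :: "(nat \<Rightarrow> real) \<Rightarrow> ennreal"
  assumes "prob_space M"
    and "\<And>j. j < d \<Longrightarrow> X j \<in> borel_measurable M"
    and "integrable M Y"
    and joint_density: "distributed M (PiM {..<d} (\<lambda>_. lborel) \<Otimes>\<^sub>M lborel)
                          (\<lambda>\<omega>. (feature_vec X {..<d} \<omega>, Y \<omega>)) q"
    and X_density: "distributed M (PiM {..<d} (\<lambda>_. lborel)) (feature_vec X {..<d}) p"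
    and positivity: "\<forall>x \<in> PiE {..<d} (\<lambda>j. rv_support M (X j)). p x > 0"
    and "stable_set M X d Y S1"
    and "stable_set M X d Y S2"
  shows "stable_set M X d Y (S1 \<inter> S2)"
proof -
  interpret prob_space M by fact
  define n where "n = {..<d}"
  let ?L = "\<lambda>S. PiM S (\<lambda>_::nat. lborel::real measure)"
  let ?B = "\<lambda>S. PiM S (\<lambda>_::nat. borel::real measure)"
  define V where "V = feature_vec X n"
  define Kj where "Kj = (\<lambda>j. rv_support M (X j))"
  define K where "K = PiE n Kj"
  define Fs where "Fs = feat_alg M X"
  define C where "C = S1 \<inter> S2"
  have finn: "finite n" by (simp add: n_def)
  have S1n: "S1 \<subseteq> n" and S2n: "S2 \<subseteq> n" and Cn: "C \<subseteq> n"
    using assms(7,8) by (auto simp: stable_set_def n_def C_def)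
  have Xm[measurable]: "\<And>j. j \<in> n \<Longrightarrow> X j \<in> borel_measurable M" using assms(2) by (simp add: n_def)
  have sLB: "\<And>S. sets (?L S) = sets (?B S)" by (rule sets_PiM_cong) auto
  have fvm: "feature_vec X S \<in> measurable M (?B S)" if "S \<subseteq> n" for S
    unfolding feature_vec_def by (rule measurable_restrict) (use that Xm in auto)
  have fvr: "feature_vec X S \<omega> = restrict (V \<omega>) S" if "S \<subseteq> n" for S \<omega>
    using that by (auto simp: feature_vec_def V_def restrict_def fun_eq_iff)
  have setsF: "sets (Fs S) = {feature_vec X S -` A \<inter> space M | A. A \<in> sets (?B S)}" if "S \<subseteq> n" for S
    unfolding Fs_def feat_alg_def by (rule sets_vimage_algebra2) (use measurable_space[OF fvm[OF that]] in auto)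
  have spF: "space (Fs S) = space M" for S by (simp add: Fs_def feat_alg_def)
  have subM: "subalgebra M (Fs S)" if "S \<subseteq> n" for S
    unfolding subalgebra_def spF setsF[OF that] using measurable_sets[OF fvm[OF that]] by auto
  have subS: "subalgebra (Fs T) (Fs S)" if "S \<subseteq> T" "T \<subseteq> n" for S T
  proof -
    have "sets (Fs S) \<subseteq> sets (Fs T)"
    proof
      fix E assume "E \<in> sets (Fs S)"
      moreover have Sn: "S \<subseteq> n" using that by auto
      ultimately obtain A where A: "A \<in> sets (?B S)" "E = feature_vec X S -` A \<inter> space M"
        using setsF[OF Sn] by auto
      define A2 where "A2 = (\<lambda>x. restrict x S) -` A \<inter> space (?B T)"
      have A2: "A2 \<in> sets (?B T)" unfolding A2_def
        by (rule measurable_sets[OF measurable_restrict_subset[OF that(1)] A(1)])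
      have rr: "T \<inter> S = S" using that by auto
      have "E = feature_vec X T -` A2 \<inter> space M"
        using A(2) measurable_space[OF fvm[OF that(2)]]
        by (auto simp: A2_def fvr[OF Sn] fvr[OF that(2)] rr simp del: restrict_apply)
      then show "E \<in> sets (Fs T)" using A2 setsF[OF that(2)] by auto
    qed
    then show ?thesis by (simp add: subalgebra_def spF)
  qed
  have Vm: "V \<in> measurable M (?L n)" using X_density by (simp add: distributed_measurable V_def n_def)
  have Kjc: "\<And>j. j \<in> n \<Longrightarrow> Kj j \<in> sets borel"
    unfolding Kj_def by (intro borel_closed supp_closed assms(1) Xm)
  have Kae: "\<And>j. j \<in> n \<Longrightarrow> AE \<omega> in M. X j \<omega> \<in> Kj j"
    unfolding Kj_def by (intro supp_ae assms(1) Xm)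
  have Ksets: "K \<in> sets (?L n)"
    unfolding K_def using Kjc finn by (intro sets_PiM_I_finite) auto
  have aeK: "AE \<omega> in M. V \<omega> \<in> K"
  proof -
    have "AE \<omega> in M. \<forall>j\<in>n. X j \<omega> \<in> Kj j" using Kae finn by (intro AE_finite_allI) auto
    then show ?thesis by eventually_elim (auto simp: K_def V_def feature_vec_def)
  qed
  have Xd: "distributed M (?L n) V p" using X_density by (simp add: V_def n_def)
  have ppos: "\<And>x. x \<in> K \<Longrightarrow> 0 < p x" using positivity by (simp add: K_def Kj_def n_def)
  have Kpos: "emeasure lborel (Kj j) \<noteq> 0" if j: "j \<in> n" for j
  proof
    assume z: "emeasure lborel (Kj j) = 0"
    define T where "T = PiE n (\<lambda>i. if i = j then Kj j else UNIV)"
    have T: "T \<in> sets (?L n)" unfolding T_def using Kjc finn j by (intro sets_PiM_I_finite) auto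
    have "emeasure (?L n) T = (\<Prod>i\<in>n. emeasure lborel (if i = j then Kj j else UNIV))"
      unfolding T_def using Kjc finn j by (intro Pl.emeasure_PiM) auto
    also have "\<dots> = 0" using z j finn by (intro prod_zero) auto
    finally have "T \<in> null_sets (?L n)" using T by auto
    then have "AE x in ?L n. x \<notin> T" by (rule AE_not_in)
    then have aeT: "AE x in ?L n. 0 < p x \<longrightarrow> x \<notin> T" by auto
    have pT: "Measurable.pred (?L n) (\<lambda>x. x \<notin> T)"
    proof (rule pred_def[THEN iffD2])
      have "{x \<in> space (?L n). x \<notin> T} = space (?L n) - T" by blast
      then show "{x \<in> space (?L n). x \<notin> T} \<in> sets (?L n)" using T by auto
    qed
    have "AE \<omega> in M. V \<omega> \<notin> T"
      by (rule distributed_AE2[OF Xd pT, THEN iffD2, OF aeT])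
    moreover have "AE \<omega> in M. X j \<omega> \<in> Kj j" by (rule Kae[OF j])
    ultimately have "AE \<omega> in M. False"
      by eventually_elim (auto simp: T_def V_def feature_vec_def j)
    then show False by simp
  qed
  have CL: "\<exists>Cs\<in>sets (Fs C). AE \<omega> in M. (\<omega> \<in> A \<longleftrightarrow> \<omega> \<in> Cs)"
    if A: "A \<in> sets (Fs S1)" and B: "B \<in> sets (Fs S2)" and AB: "AE \<omega> in M. (\<omega> \<in> A \<longleftrightarrow> \<omega> \<in> B)" for A B
  proof -
    obtain A0 where A0: "A0 \<in> sets (?B S1)" "A = feature_vec X S1 -` A0 \<inter> space M"
      using A setsF[OF S1n] by auto
    obtain B0 where B0: "B0 \<in> sets (?B S2)" "B = feature_vec X S2 -` B0 \<inter> space M"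
      using B setsF[OF S2n] by auto
    have A0L: "A0 \<in> sets (?L S1)" and B0L: "B0 \<in> sets (?L S2)" using A0 B0 sLB by auto
    have "AE \<omega> in M. V \<omega> \<in> K \<longrightarrow> (restrict (V \<omega>) S1 \<in> A0 \<longleftrightarrow> restrict (V \<omega>) S2 \<in> B0)"
      using AB AE_space by eventually_elim (auto simp: A0(2) B0(2) fvr S1n S2n)
    then have "AE x in ?L n. 0 < p x \<longrightarrow> (x \<in> K \<longrightarrow> (restrict x S1 \<in> A0 \<longleftrightarrow> restrict x S2 \<in> B0))"
      using distributed_AE2[OF Xd pred_meas[OF S1n S2n Ksets A0L B0L]] by simp
    then have "AE x in ?L n. x \<in> PiE n Kj \<longrightarrow> (restrict x S1 \<in> A0 \<longleftrightarrow> restrict x S2 \<in> B0)"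
      by eventually_elim (use ppos in \<open>auto simp: K_def\<close>)
    from PL[OF finn S1n S2n Kjc Kpos A0L B0L this]
    obtain C' where C': "C' \<in> sets (?L C)"
      and aeC: "AE x in ?L n. x \<in> PiE n Kj \<longrightarrow> (restrict x S1 \<in> A0 \<longleftrightarrow> restrict x C \<in> C')"
      unfolding C_def by blast
    have "AE x in ?L n. 0 < p x \<longrightarrow> (x \<in> K \<longrightarrow> (restrict x S1 \<in> A0 \<longleftrightarrow> restrict x C \<in> C'))"
      using aeC by (auto simp: K_def)
    then have "AE \<omega> in M. V \<omega> \<in> K \<longrightarrow> (restrict (V \<omega>) S1 \<in> A0 \<longleftrightarrow> restrict (V \<omega>) C \<in> C')"
      using distributed_AE2[OF Xd pred_meas[OF S1n Cn Ksets A0L C']] by simp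
    then have ae2: "AE \<omega> in M. (\<omega> \<in> A \<longleftrightarrow> \<omega> \<in> feature_vec X C -` C' \<inter> space M)"
      using aeK AE_space by eventually_elim (auto simp: A0(2) fvr S1n Cn)
    have "feature_vec X C -` C' \<inter> space M \<in> sets (Fs C)"
      using C' sLB setsF[OF Cn] by auto
    then show ?thesis using ae2 by blast
  qed
  have sf: "sigma_finite_subalgebra M (Fs S)" if "S \<subseteq> n" for S
    by (rule finite_measure_subalgebra_is_sigma_finite)
       (simp add: finite_measure_subalgebra_def finite_measure_subalgebra_axioms_def subM[OF that] finite_measure_axioms)
  define Z1 where "Z1 = real_cond_exp M (Fs S1) Y"
  define Z2 where "Z2 = real_cond_exp M (Fs S2) Y"
  define Zn where "Zn = real_cond_exp M (Fs n) Y"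
  have st1: "AE \<omega> in M. Z1 \<omega> = Zn \<omega>" using assms(7) by (simp add: stable_set_def Fs_def n_def Z1_def Zn_def)
  have st2: "AE \<omega> in M. Z2 \<omega> = Zn \<omega>" using assms(8) by (simp add: stable_set_def Fs_def n_def Z2_def Zn_def)
  have Z1m: "Z1 \<in> borel_measurable (Fs S1)" unfolding Z1_def by (rule borel_measurable_cond_exp)
  have Z2m: "Z2 \<in> borel_measurable (Fs S2)" unfolding Z2_def by (rule borel_measurable_cond_exp)
  have Z1i: "integrable M Z1" unfolding Z1_def by (rule sigma_finite_subalgebra.real_cond_exp_int(1)[OF sf[OF S1n] assms(3)])
  have lev: "\<exists>Cs\<in>sets (Fs C). AE \<omega> in M. (r < c * Z1 \<omega> \<longleftrightarrow> \<omega> \<in> Cs)" for r c :: real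
  proof -
    have A: "{\<omega> \<in> space (Fs S1). r < c * Z1 \<omega>} \<in> sets (Fs S1)" using Z1m by measurable
    have B: "{\<omega> \<in> space (Fs S2). r < c * Z2 \<omega>} \<in> sets (Fs S2)" using Z2m by measurable
    have AB: "AE \<omega> in M. (\<omega> \<in> {\<omega> \<in> space (Fs S1). r < c * Z1 \<omega>} \<longleftrightarrow> \<omega> \<in> {\<omega> \<in> space (Fs S2). r < c * Z2 \<omega>})"
      using st1 st2 by eventually_elim (auto simp: spF)
    obtain Cs where "Cs \<in> sets (Fs C)" "AE \<omega> in M. (\<omega> \<in> {\<omega> \<in> space (Fs S1). r < c * Z1 \<omega>} \<longleftrightarrow> \<omega> \<in> Cs)"
      using CL[OF A B AB] by blast
    moreover from this(2) have "AE \<omega> in M. (r < c * Z1 \<omega> \<longleftrightarrow> \<omega> \<in> Cs)"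
      using AE_space by eventually_elim (auto simp: spF)
    ultimately show ?thesis by blast
  qed
  have subC1: "subalgebra (Fs S1) (Fs C)" by (rule subS) (use S1n in \<open>auto simp: C_def\<close>)
  have le1: "AE \<omega> in M. Z1 \<omega> \<le> real_cond_exp M (Fs C) Z1 \<omega>"
    by (rule cond_le[OF assms(1) subM[OF Cn] Z1i]) (use lev[of _ 1] in simp)
  have le2: "AE \<omega> in M. (-1) * Z1 \<omega> \<le> real_cond_exp M (Fs C) (\<lambda>\<omega>. (-1) * Z1 \<omega>) \<omega>"
    by (rule cond_le[OF assms(1) subM[OF Cn]]) (use Z1i lev[of _ "-1"] in auto)
  have cm: "AE \<omega> in M. real_cond_exp M (Fs C) (\<lambda>\<omega>. (-1) * Z1 \<omega>) \<omega> = (-1) * real_cond_exp M (Fs C) Z1 \<omega>"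
    by (rule sigma_finite_subalgebra.real_cond_exp_cmult[OF sf[OF Cn] Z1i])
  have ns: "AE \<omega> in M. real_cond_exp M (Fs C) Z1 \<omega> = real_cond_exp M (Fs C) Y \<omega>"
    unfolding Z1_def by (rule sigma_finite_subalgebra.real_cond_exp_nested_subalg[OF sf[OF Cn] subM[OF S1n] subC1 assms(3)])
  have "AE \<omega> in M. real_cond_exp M (Fs C) Y \<omega> = Zn \<omega>"
    using le1 le2 cm ns st1 by eventually_elim auto
  then show ?thesis
    using Cn by (simp add: stable_set_def Fs_def n_def C_def Zn_def)
qed

end
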